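(* For every positive integer $b_1$ there exists $r^*_{b_1}\in[0,1]$ such that for every positive integer $b_2<m^*$ and every Nash equilibrium $\sigma^*$ of $\Gamma(b_1,b_2)$ whose attack strategy is supported on nonempty attack plans, $r(\sigma^* )=r^*_{b_1}$. (When $b_1<n^*$, every Nash equilibrium has attack strategy supported on plans of size $b_2$, and then $U_1(\sigma^* )=b_2r^*_{b_1}$ and $U_2(\sigma^* )=b_2(1-r^*_{b_1})$.)
   Context: Detection model: finite nonempty sets $\mathcal V$, $\mathcal E$, monitoring sets $\mathcal C_i\subseteq\mathcal E$ ($i\in\mathcal V$) with every $e\in\mathcal E$ in some $\mathcal C_i$; $\mathcal C_S=\bigcup_{i\in S}\mathcal C_i$; $F(S,T)=|\mathcal C_S\cap T|$. Set cover: $S\subseteq\mathcal V$ with $\mathcal C_S=\mathcal E$; $n^*$ = minimum size of a set cover. Set packing: $T\subseteq\mathcal E$ with $|\mathcal C_i\cap T|\le1$ for all $i$; $m^*$ = maximum size of a set packing. Game $\Gamma(b_1,b_2)$ ($b_1,b_2$ positive integers): $\mathcal A_1=\{S\subseteq\mathcal V:|S|\le b_1\}$, $\mathcal A_2=\{T\subseteq\mathcal E:|T|\le b_2\}$; mixed strategies $\sigma^1\in\Delta(\mathcal A_1)$, $\sigma^2\in\Delta(\mathcal A_2)$ (independent); payoffs $U_1=\mathbb E[F(S,T)]$, $U_2=\mathbb E[|T|]-\mathbb E[F(S,T)]$; Nash equilibrium as usual. Expected detection rate $r(\sigma)=\mathbb E_{S\sim\sigma^1,T\sim\sigma^2}[F(S,T)/|T|]$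 for profiles whose attack strategy is supported on nonempty sets. *)

theory Defs
  imports "HOL-Probability.Probability_Mass_Function"
begin

definition detection_model :: "'v set \<Rightarrow> 'e set \<Rightarrow> ('v \<Rightarrow> 'e set) \<Rightarrow> bool" where
  "detection_model V E C \<longleftrightarrow> finite V \<and> V \<noteq> {} \<and> finite E \<and> E \<noteq> {} \<and>
     (\<forall>i\<in>V. C i \<subseteq> E) \<and> (\<forall>e\<in>E. \<exists>i\<in>V. e \<in> C i)"

definition CS :: "('v \<Rightarrow> 'e set) \<Rightarrow> 'v set \<Rightarrow> 'e set" where
  "CS C S = (\<Union>i\<in>S. C i)"

definition F :: "('v \<Rightarrow> 'e set) \<Rightarrow> 'v set \<Rightarrow> 'e set \<Rightarrow> nat" where
  "F C S T = card (CS C S \<inter> T)"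

definition set_cover :: "'v set \<Rightarrow> 'e set \<Rightarrow> ('v \<Rightarrow> 'e set) \<Rightarrow> 'v set \<Rightarrow> bool" where
  "set_cover V E C S \<longleftrightarrow> S \<subseteq> V \<and> CS C S = E"

definition n_star :: "'v set \<Rightarrow> 'e set \<Rightarrow> ('v \<Rightarrow> 'e set) \<Rightarrow> nat" where
  "n_star V E C = Min {card S | S. set_cover V E C S}"

definition set_packing :: "'v set \<Rightarrow> 'e set \<Rightarrow> ('v \<Rightarrow> 'e set) \<Rightarrow> 'e set \<Rightarrow> bool" where
  "set_packing V E C T \<longleftrightarrow> T \<subseteq> E \<and> (\<forall>i\<in>V. card (C i \<inter> T) \<le> 1)"

definition m_star :: "'v set \<Rightarrow> 'e set \<Rightarrow> ('v \<Rightarrow> 'e set) \<Rightarrow> nat" where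
  "m_star V E C = Max {card T | T. set_packing V E C T}"

definition A1 :: "'v set \<Rightarrow> nat \<Rightarrow> 'v set set" where
  "A1 V b1 = {S. S \<subseteq> V \<and> card S \<le> b1}"

definition A2 :: "'e set \<Rightarrow> nat \<Rightarrow> 'e set set" where
  "A2 E b2 = {T. T \<subseteq> E \<and> card T \<le> b2}"

definition U1 :: "('v \<Rightarrow> 'e set) \<Rightarrow> 'v set pmf \<Rightarrow> 'e set pmf \<Rightarrow> real" where
  "U1 C \<sigma>1 \<sigma>2 = measure_pmf.expectation (pair_pmf \<sigma>1 \<sigma>2) (\<lambda>(S, T). real (F C S T))"

definition U2 :: "('v \<Rightarrow> 'e set) \<Rightarrow> 'v set pmf \<Rightarrow> 'e set pmf \<Rightarrow> real" where
  "U2 C \<sigma>1 \<sigma>2 = measure_pmf.expectation \<sigma>2 (\<lambda>T. real (card T)) - U1 C \<sigma>1 \<sigma>2"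

definition is_NE :: "'v set \<Rightarrow> 'e set \<Rightarrow> ('v \<Rightarrow> 'e set) \<Rightarrow> nat \<Rightarrow> nat \<Rightarrow>
    'v set pmf \<Rightarrow> 'e set pmf \<Rightarrow> bool" where
  "is_NE V E C b1 b2 \<sigma>1 \<sigma>2 \<longleftrightarrow>
     set_pmf \<sigma>1 \<subseteq> A1 V b1 \<and> set_pmf \<sigma>2 \<subseteq> A2 E b2 \<and>
     (\<forall>\<tau>1. set_pmf \<tau>1 \<subseteq> A1 V b1 \<longrightarrow> U1 C \<tau>1 \<sigma>2 \<le> U1 C \<sigma>1 \<sigma>2) \<and>
     (\<forall>\<tau>2. set_pmf \<tau>2 \<subseteq> A2 E b2 \<longrightarrow> U2 C \<sigma>1 \<tau>2 \<le> U2 C \<sigma>1 \<sigma>2)"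

definition rate :: "('v \<Rightarrow> 'e set) \<Rightarrow> 'v set pmf \<Rightarrow> 'e set pmf \<Rightarrow> real" where
  "rate C \<sigma>1 \<sigma>2 = measure_pmf.expectation (pair_pmf \<sigma>1 \<sigma>2)
      (\<lambda>(S, T). real (F C S T) / real (card T))"

end

theory Submission
  imports Defs
begin


lemma E_sum:
  fixes f :: "'a \<Rightarrow> real"
  assumes "finite (set_pmf p)"
  shows "measure_pmf.expectation p f = (\<Sum>x\<in>set_pmf p. f x * pmf p x)"
  by (rule integral_measure_pmf_real) (auto simp: assms)

lemma E_pair:
  fixes f :: "'a \<Rightarrow> 'b \<Rightarrow> real"
  assumes p: "finite (set_pmf p)" and q: "finite (set_pmf q)"
  shows "measure_pmf.expectation (pair_pmf p q) (\<lambda>(x,y). f x y) =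
         measure_pmf.expectation p (\<lambda>x. measure_pmf.expectation q (\<lambda>y. f x y))"
    and "measure_pmf.expectation (pair_pmf p q) (\<lambda>(x,y). f x y) =
         measure_pmf.expectation q (\<lambda>y. measure_pmf.expectation p (\<lambda>x. f x y))"
proof -
  have fin: "finite (set_pmf (pair_pmf p q))" using p q by simp
  have A: "measure_pmf.expectation (pair_pmf p q) (\<lambda>(x,y). f x y) =
     (\<Sum>x\<in>set_pmf p. \<Sum>y\<in>set_pmf q. f x y * (pmf p x * pmf q y))"
    unfolding E_sum[OF fin] set_pair_pmf sum.cartesian_product
    by (intro sum.cong refl) (auto simp: pmf_pair)
  show "measure_pmf.expectation (pair_pmf p q) (\<lambda>(x,y). f x y) =
         measure_pmf.expectation p (\<lambda>x. measure_pmf.expectation q (\<lambda>y. f x y))"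
    unfolding A E_sum[OF p] E_sum[OF q] sum_distrib_right by (simp add: mult_ac)
  show "measure_pmf.expectation (pair_pmf p q) (\<lambda>(x,y). f x y) =
         measure_pmf.expectation q (\<lambda>y. measure_pmf.expectation p (\<lambda>x. f x y))"
    unfolding A E_sum[OF p] E_sum[OF q] sum_distrib_right
    by (subst sum.swap) (simp add: mult_ac)
qed

lemma E_return: "measure_pmf.expectation (return_pmf x) (f :: _ \<Rightarrow> real) = f x"
  by (subst E_sum) auto

lemma E_const:
  assumes "finite (set_pmf p)"
  shows "measure_pmf.expectation p (\<lambda>_. c::real) = c"
  unfolding E_sum[OF assms] by (simp add: sum_distrib_left[symmetric] sum_pmf_eq_1[OF assms])

lemma E_mono:
  fixes f g :: "'a \<Rightarrow> real"
  assumes "finite (set_pmf p)" "\<And>x. x \<in> set_pmf p \<Longrightarrow> f x \<le> g x"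
  shows "measure_pmf.expectation p f \<le> measure_pmf.expectation p g"
  unfolding E_sum[OF assms(1)] by (intro sum_mono mult_right_mono) (auto simp: assms)

lemma E_le_const:
  fixes f :: "'a \<Rightarrow> real"
  assumes "finite (set_pmf p)" "\<And>x. x \<in> set_pmf p \<Longrightarrow> f x \<le> c"
  shows "measure_pmf.expectation p f \<le> c"
  using E_mono[OF assms(1), of f "\<lambda>_. c"] assms E_const by auto

lemma E_ge_const:
  fixes f :: "'a \<Rightarrow> real"
  assumes "finite (set_pmf p)" "\<And>x. x \<in> set_pmf p \<Longrightarrow> c \<le> f x"
  shows "c \<le> measure_pmf.expectation p f"
  using E_mono[OF assms(1), of "\<lambda>_. c" f] assms E_const by auto

lemma E_add:
  fixes f g :: "'a \<Rightarrow> real"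
  assumes "finite (set_pmf p)"
  shows "measure_pmf.expectation p (\<lambda>x. f x + g x) = measure_pmf.expectation p f + measure_pmf.expectation p g"
  unfolding E_sum[OF assms] by (simp add: sum.distrib algebra_simps)

lemma E_diff:
  fixes f g :: "'a \<Rightarrow> real"
  assumes "finite (set_pmf p)"
  shows "measure_pmf.expectation p (\<lambda>x. f x - g x) = measure_pmf.expectation p f - measure_pmf.expectation p g"
  unfolding E_sum[OF assms] by (simp add: sum_subtractf algebra_simps)

lemma E_cmult:
  fixes f :: "'a \<Rightarrow> real"
  assumes "finite (set_pmf p)"
  shows "measure_pmf.expectation p (\<lambda>x. c * f x) = c * measure_pmf.expectation p f"
  unfolding E_sum[OF assms] by (simp add: sum_distrib_left algebra_simps)

lemma E_divc:
  fixes f :: "'a \<Rightarrow> real"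
  assumes "finite (set_pmf p)"
  shows "measure_pmf.expectation p (\<lambda>x. f x / c) = measure_pmf.expectation p f / c"
  unfolding E_sum[OF assms] by (simp add: sum_divide_distrib algebra_simps)

lemma E_setsum:
  fixes f :: "'i \<Rightarrow> 'a \<Rightarrow> real"
  assumes "finite (set_pmf p)"
  shows "measure_pmf.expectation p (\<lambda>x. \<Sum>i\<in>I. f i x) = (\<Sum>i\<in>I. measure_pmf.expectation p (f i))"
  unfolding E_sum[OF assms] sum_distrib_right by (rule sum.swap)

lemma E_max_support:
  fixes f :: "'a \<Rightarrow> real"
  assumes fin: "finite (set_pmf p)" and le: "\<And>x. x \<in> set_pmf p \<Longrightarrow> f x \<le> c"
    and ge: "c \<le> measure_pmf.expectation p f" and x: "x \<in> set_pmf p"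
  shows "f x = c"
proof (rule ccontr)
  assume ne: "f x \<noteq> c"
  have "measure_pmf.expectation p (\<lambda>y. c - f y) = c - measure_pmf.expectation p f"
    using E_diff[OF fin, of "\<lambda>_. c" f] E_const[OF fin] by simp
  also have "\<dots> \<le> 0" using ge by simp
  finally have le0: "(\<Sum>y\<in>set_pmf p. (c - f y) * pmf p y) \<le> 0" unfolding E_sum[OF fin] .
  have "(c - f x) * pmf p x \<le> (\<Sum>y\<in>set_pmf p. (c - f y) * pmf p y)"
    by (rule member_le_sum) (auto simp: x fin le)
  moreover have "(c - f x) * pmf p x > 0" using ne le[OF x] x by (auto simp: set_pmf_iff intro!: mult_pos_pos)
  ultimately show False using le0 by simp
qed

lemma E_ge_point:
  fixes f :: "'a \<Rightarrow> real"
  assumes fin: "finite (set_pmf p)" and nn: "\<And>x. x \<in> set_pmf p \<Longrightarrow> 0 \<le> f x" and x: "x \<in> set_pmf p"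
  shows "f x * pmf p x \<le> measure_pmf.expectation p f"
  unfolding E_sum[OF fin] by (rule member_le_sum) (auto simp: x fin nn)



definition kk :: "('v \<Rightarrow> 'e set) \<Rightarrow> 'v set pmf \<Rightarrow> 'e set \<Rightarrow> real" where
  "kk C \<sigma>1 T = measure_pmf.expectation \<sigma>1 (\<lambda>S. real (F C S T))"
definition gg :: "('v \<Rightarrow> 'e set) \<Rightarrow> 'e set pmf \<Rightarrow> 'v set \<Rightarrow> real" where
  "gg C \<sigma>2 S = measure_pmf.expectation \<sigma>2 (\<lambda>T. real (F C S T))"
definition qd :: "('v \<Rightarrow> 'e set) \<Rightarrow> 'v set pmf \<Rightarrow> 'e \<Rightarrow> real" where
  "qd C \<sigma>1 e = kk C \<sigma>1 {e}"
definition ub :: "('v \<Rightarrow> 'e set) \<Rightarrow> 'v set pmf \<Rightarrow> 'e set \<Rightarrow> real" where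
  "ub C \<sigma>1 E = Max ((\<lambda>e. 1 - qd C \<sigma>1 e) ` E)"

lemma F_single: "F C S {e} = (if e \<in> CS C S then 1 else 0)"
  by (auto simp: F_def)

lemma F_sum:
  assumes "finite T"
  shows "real (F C S T) = (\<Sum>e\<in>T. real (F C S {e}))"
proof -
  have "(\<Sum>e\<in>T. real (F C S {e})) = (\<Sum>e\<in>T. if e \<in> CS C S then 1 else 0)"
    by (intro sum.cong) (auto simp: F_single)
  also have "\<dots> = real (card (T \<inter> CS C S))"
    using assms by (simp add: sum.If_cases)
  finally show ?thesis by (simp add: F_def Int_commute)
qed

lemma U1_split:
  assumes "finite (set_pmf \<sigma>1)" "finite (set_pmf \<sigma>2)"
  shows "U1 C \<sigma>1 \<sigma>2 = measure_pmf.expectation \<sigma>1 (gg C \<sigma>2)"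
    and "U1 C \<sigma>1 \<sigma>2 = measure_pmf.expectation \<sigma>2 (kk C \<sigma>1)"
  unfolding U1_def gg_def kk_def
  using E_pair[OF assms, of "\<lambda>S T. real (F C S T)"] by auto

lemma rate_split:
  assumes "finite (set_pmf \<sigma>1)" "finite (set_pmf \<sigma>2)"
  shows "rate C \<sigma>1 \<sigma>2 = measure_pmf.expectation \<sigma>2 (\<lambda>T. kk C \<sigma>1 T / real (card T))"
  unfolding rate_def kk_def
  using E_pair(2)[OF assms, of "\<lambda>S T. real (F C S T) / real (card T)"] E_divc[OF assms(1)] by auto

lemma kk_sum:
  assumes "finite (set_pmf \<sigma>1)" "finite T"
  shows "kk C \<sigma>1 T = (\<Sum>e\<in>T. qd C \<sigma>1 e)"
  unfolding qd_def kk_def F_sum[OF assms(2)]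
  by (rule E_setsum[OF assms(1)])

lemma qd_bounds:
  assumes "finite (set_pmf \<sigma>1)"
  shows "0 \<le> qd C \<sigma>1 e" "qd C \<sigma>1 e \<le> 1"
proof -
  show "0 \<le> qd C \<sigma>1 e" unfolding qd_def kk_def
    by (rule E_ge_const[OF assms]) (simp add: F_single)
  show "qd C \<sigma>1 e \<le> 1" unfolding qd_def kk_def
    by (rule E_le_const[OF assms]) (simp add: F_single)
qed

lemma qd_one_iff:
  assumes "finite (set_pmf \<sigma>1)"
  shows "qd C \<sigma>1 e = 1 \<longleftrightarrow> (\<forall>S\<in>set_pmf \<sigma>1. e \<in> CS C S)"
proof
  assume h: "qd C \<sigma>1 e = 1"
  show "\<forall>S\<in>set_pmf \<sigma>1. e \<in> CS C S"
  proof
    fix S assume S: "S \<in> set_pmf \<sigma>1"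
    have "real (F C S {e}) = 1"
      by (rule E_max_support[OF assms _ _ S]) (use h in \<open>auto simp: F_single qd_def kk_def\<close>)
    then show "e \<in> CS C S" by (auto simp: F_single split: if_splits)
  qed
next
  assume h: "\<forall>S\<in>set_pmf \<sigma>1. e \<in> CS C S"
  have "qd C \<sigma>1 e = measure_pmf.expectation \<sigma>1 (\<lambda>_. 1::real)"
    unfolding qd_def kk_def by (rule integral_cong_AE) (auto simp: AE_measure_pmf_iff h F_single)
  then show "qd C \<sigma>1 e = 1" using E_const[OF assms] by simp
qed

lemma U1_return1:
  assumes "finite (set_pmf \<sigma>2)"
  shows "U1 C (return_pmf S) \<sigma>2 = gg C \<sigma>2 S"
  using U1_split(1)[of "return_pmf S" \<sigma>2 C] assms by (simp add: E_return)

lemma U1_return2: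
  assumes "finite (set_pmf \<sigma>1)"
  shows "U1 C \<sigma>1 (return_pmf T) = kk C \<sigma>1 T"
  using U1_split(2)[of \<sigma>1 "return_pmf T" C] assms by (simp add: E_return)

lemma U2_return2:
  assumes "finite (set_pmf \<sigma>1)"
  shows "U2 C \<sigma>1 (return_pmf T) = real (card T) - kk C \<sigma>1 T"
  using U1_return2[OF assms] by (simp add: U2_def E_return)

locale dm =
  fixes V :: "'v set" and E :: "'e set" and C :: "'v \<Rightarrow> 'e set"
  assumes dm: "detection_model V E C"
begin

lemma finV: "finite V" and finE: "finite E" and Vne: "V \<noteq> {}" and Ene: "E \<noteq> {}"
  and CsubE: "i \<in> V \<Longrightarrow> C i \<subseteq> E" and cover: "e \<in> E \<Longrightarrow> \<exists>i\<in>V. e \<in> C i"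
  using dm by (auto simp: detection_model_def)

lemma finA1: "finite (A1 V b1)"
  by (rule finite_subset[of _ "Pow V"]) (auto simp: A1_def finV)

lemma finA2: "finite (A2 E b2)"
  by (rule finite_subset[of _ "Pow E"]) (auto simp: A2_def finE)

lemma fin_supp1: "set_pmf \<tau> \<subseteq> A1 V b1 \<Longrightarrow> finite (set_pmf \<tau>)"
  using finA1 finite_subset by blast
lemma fin_supp2: "set_pmf \<tau> \<subseteq> A2 E b2 \<Longrightarrow> finite (set_pmf \<tau>)"
  using finA2 finite_subset by blast

lemma ub_bounds:
  assumes "finite (set_pmf \<tau>)"
  shows "0 \<le> ub C \<tau> E" "ub C \<tau> E \<le> 1" "e \<in> E \<Longrightarrow> 1 - qd C \<tau> e \<le> ub C \<tau> E"
proof -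
  have fin: "finite ((\<lambda>e. 1 - qd C \<tau> e) ` E)" using finE by simp
  have ne: "(\<lambda>e. 1 - qd C \<tau> e) ` E \<noteq> {}" using Ene by simp
  show "e \<in> E \<Longrightarrow> 1 - qd C \<tau> e \<le> ub C \<tau> E" unfolding ub_def using fin by auto
  obtain e where "e \<in> E" using Ene by auto
  then have "1 - qd C \<tau> e \<le> ub C \<tau> E" unfolding ub_def using fin by auto
  then show "0 \<le> ub C \<tau> E" using qd_bounds[OF assms, of C e] by simp
  show "ub C \<tau> E \<le> 1" unfolding ub_def using fin ne by (subst Max_le_iff) (auto simp: qd_bounds(1)[OF assms])
qed

lemma ub_attained: "\<exists>e\<in>E. 1 - qd C \<tau> e = ub C \<tau> E"
proof -
  have fin: "finite ((\<lambda>e. 1 - qd C \<tau> e) ` E)" using finE by simp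
  have ne: "(\<lambda>e. 1 - qd C \<tau> e) ` E \<noteq> {}" using Ene by simp
  show ?thesis using Max_in[OF fin ne] unfolding ub_def by auto
qed

lemma CS_sub: "S \<subseteq> V \<Longrightarrow> CS C S \<subseteq> E"
  using CsubE by (auto simp: CS_def)

lemma F_packing:
  assumes "set_packing V E C P" "S \<subseteq> V" "finite S"
  shows "F C S P \<le> card S"
proof -
  have "F C S P = card (\<Union>i\<in>S. C i \<inter> P)" by (simp add: F_def CS_def)
  also have "\<dots> \<le> (\<Sum>i\<in>S. card (C i \<inter> P))" by (rule card_UN_le[OF assms(3)])
  also have "\<dots> \<le> (\<Sum>i\<in>S. 1)" using assms by (intro sum_mono) (auto simp: set_packing_def)
  finally show ?thesis by simp
qed

end


lemma P1:
  assumes S: "finite S" and T: "finite T"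
  shows "(\<Sum>v\<in>S. real (F C S T) - real (F C (S - {v}) T)) \<le> real (F C S T)"
proof -
  define X where "X = CS C S \<inter> T"
  define Y where "Y v = CS C (S - {v}) \<inter> T" for v
  have YX: "Y v \<subseteq> X" for v by (auto simp: X_def Y_def CS_def)
  have finX: "finite X" using T by (simp add: X_def)
  have eq: "real (F C S T) - real (F C (S - {v}) T) = real (card (X - Y v))" for v
  proof -
    have "card (X - Y v) = card X - card (Y v)" using YX finX by (meson card_Diff_subset finite_subset)
    moreover have "card (Y v) \<le> card X" using YX finX by (simp add: card_mono)
    ultimately show ?thesis by (simp add: F_def X_def Y_def)
  qed
  have disj: "disjoint_family_on (\<lambda>v. X - Y v) S"
    unfolding disjoint_family_on_def X_def Y_def CS_def by auto
  have "(\<Sum>v\<in>S. real (card (X - Y v))) = real (\<Sum>v\<in>S. card (X - Y v))" by simp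
  also have "(\<Sum>v\<in>S. card (X - Y v)) = card (\<Union>v\<in>S. X - Y v)"
    using disj S finX by (subst card_UN_disjoint) (auto simp: disjoint_family_on_def)
  also have "\<dots> \<le> card X" using finX by (intro card_mono) auto
  finally show ?thesis using eq by (simp add: F_def X_def)
qed

locale ne = dm V E C for V :: "'v set" and E :: "'e set" and C :: "'v \<Rightarrow> 'e set" +
  fixes b1 b2 :: nat and \<sigma>1 :: "'v set pmf" and \<sigma>2 :: "'e set pmf"
  assumes NE: "is_NE V E C b1 b2 \<sigma>1 \<sigma>2"
    and b1pos: "0 < b1" and b2pos: "0 < b2" and b2m: "b2 < m_star V E C"
begin

lemma supp1: "set_pmf \<sigma>1 \<subseteq> A1 V b1" and supp2: "set_pmf \<sigma>2 \<subseteq> A2 E b2"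
  using NE by (auto simp: is_NE_def)

lemma fin1: "finite (set_pmf \<sigma>1)" by (rule fin_supp1[OF supp1])
lemma fin2: "finite (set_pmf \<sigma>2)" by (rule fin_supp2[OF supp2])

lemma S_props: "S \<in> set_pmf \<sigma>1 \<Longrightarrow> S \<subseteq> V \<and> finite S \<and> card S \<le> b1"
  using supp1 finV by (auto simp: A1_def finite_subset)
lemma T_props: "T \<in> set_pmf \<sigma>2 \<Longrightarrow> T \<subseteq> E \<and> finite T \<and> card T \<le> b2"
  using supp2 finE by (auto simp: A2_def finite_subset)

abbreviation "V0 \<equiv> U1 C \<sigma>1 \<sigma>2"

lemma def_br: "S' \<in> A1 V b1 \<Longrightarrow> gg C \<sigma>2 S' \<le> V0"
proof -
  assume "S' \<in> A1 V b1"
  then have "U1 C (return_pmf S') \<sigma>2 \<le> V0" using NE unfolding is_NE_def by auto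
  then show ?thesis using U1_return1[OF fin2, of C S'] by simp
qed

lemma def_supp: "S \<in> set_pmf \<sigma>1 \<Longrightarrow> gg C \<sigma>2 S = V0"
  by (rule E_max_support[OF fin1 _ _ ]) (use def_br supp1 U1_split(1)[OF fin1 fin2, of C] in auto)

lemma U2_eq: "U2 C \<sigma>1 \<sigma>2 = measure_pmf.expectation \<sigma>2 (\<lambda>T. real (card T) - kk C \<sigma>1 T)"
  unfolding U2_def U1_split(2)[OF fin1 fin2] by (rule E_diff[OF fin2, symmetric])

lemma att_br: "T' \<in> A2 E b2 \<Longrightarrow> real (card T') - kk C \<sigma>1 T' \<le> U2 C \<sigma>1 \<sigma>2"
proof -
  assume "T' \<in> A2 E b2"
  then have "U2 C \<sigma>1 (return_pmf T') \<le> U2 C \<sigma>1 \<sigma>2" using NE unfolding is_NE_def by auto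
  then show ?thesis using U2_return2[OF fin1, of C T'] by simp
qed

lemma att_supp: "T \<in> set_pmf \<sigma>2 \<Longrightarrow> real (card T) - kk C \<sigma>1 T = U2 C \<sigma>1 \<sigma>2"
  by (rule E_max_support[OF fin2 _ _ ]) (use att_br supp2 U2_eq in auto)

lemma U2_le: "U2 C \<sigma>1 \<sigma>2 \<le> real b2 - V0"
proof -
  have "measure_pmf.expectation \<sigma>2 (\<lambda>T. real (card T)) \<le> real b2"
    by (rule E_le_const[OF fin2]) (use T_props in auto)
  then show ?thesis by (simp add: U2_def)
qed

lemma att_bound: "T' \<in> A2 E b2 \<Longrightarrow> card T' = b2 \<Longrightarrow> V0 \<le> kk C \<sigma>1 T'"
  using att_br[of T'] U2_le by simp

lemma kk_nonneg: "0 \<le> kk C \<sigma>1 T"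
  unfolding kk_def by (rule E_ge_const[OF fin1]) auto

end


context ne begin

lemma gain:
  assumes f: "\<forall>T\<in>set_pmf \<sigma>2. f \<in> T" and fi: "f \<in> C i" and nf: "f \<notin> CS C S"
  shows "gg C \<sigma>2 S + 1 \<le> gg C \<sigma>2 (insert i S)"
proof -
  have pt: "real (F C S T) + 1 \<le> real (F C (insert i S) T)" if T: "T \<in> set_pmf \<sigma>2" for T
  proof -
    have finT: "finite T" using T_props[OF T] by auto
    have "insert f (CS C S \<inter> T) \<subseteq> CS C (insert i S) \<inter> T"
      using f T fi by (auto simp: CS_def)
    then have "card (insert f (CS C S \<inter> T)) \<le> card (CS C (insert i S) \<inter> T)"
      using finT by (intro card_mono) auto
    moreover have "card (insert f (CS C S \<inter> T)) = card (CS C S \<inter> T) + 1"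
      using nf finT by simp
    ultimately show ?thesis by (simp add: F_def)
  qed
  have "gg C \<sigma>2 S + 1 = measure_pmf.expectation \<sigma>2 (\<lambda>T. real (F C S T) + 1)"
    unfolding gg_def using E_add[OF fin2, of "\<lambda>T. real (F C S T)" "\<lambda>_. 1"] E_const[OF fin2] by simp
  also have "\<dots> \<le> gg C \<sigma>2 (insert i S)"
    unfolding gg_def by (rule E_mono[OF fin2]) (rule pt)
  finally show ?thesis .
qed

lemma V0_ge_b1:
  assumes f: "\<forall>T\<in>set_pmf \<sigma>2. f \<in> T" and fE: "f \<in> E" and q: "qd C \<sigma>1 f < 1"
  shows "real b1 \<le> V0"
proof -
  obtain S0 where S0: "S0 \<in> set_pmf \<sigma>1" "f \<notin> CS C S0"
    using q qd_one_iff[OF fin1, of C f] by auto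
  obtain i where i: "i \<in> V" "f \<in> C i" using cover[OF fE] by auto
  have S0p: "S0 \<subseteq> V" "finite S0" "card S0 \<le> b1" using S_props[OF S0(1)] by auto
  have g0: "gg C \<sigma>2 S0 = V0" using def_supp[OF S0(1)] .
  show ?thesis
  proof (cases "card S0 < b1")
    case True
    have "insert i S0 \<in> A1 V b1" using True S0p i by (auto simp: A1_def card_insert_if)
    then have "gg C \<sigma>2 (insert i S0) \<le> V0" by (rule def_br)
    moreover have "gg C \<sigma>2 S0 + 1 \<le> gg C \<sigma>2 (insert i S0)" by (rule gain[OF f i(2) S0(2)])
    ultimately show ?thesis using g0 by simp
  next
    case False
    then have cS0: "card S0 = b1" using S0p by simp
    have each: "1 \<le> gg C \<sigma>2 S0 - gg C \<sigma>2 (S0 - {v})" if v: "v \<in> S0" for v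
    proof -
      have nf: "f \<notin> CS C (S0 - {v})" using S0(2) by (auto simp: CS_def)
      have "card (S0 - {v}) = b1 - 1" using v cS0 S0p by simp
      then have "insert i (S0 - {v}) \<in> A1 V b1" using S0p i b1pos
        by (auto simp: A1_def card_insert_if)
      then have "gg C \<sigma>2 (insert i (S0 - {v})) \<le> V0" by (rule def_br)
      moreover have "gg C \<sigma>2 (S0 - {v}) + 1 \<le> gg C \<sigma>2 (insert i (S0 - {v}))"
        by (rule gain[OF f i(2) nf])
      ultimately show ?thesis using g0 by simp
    qed
    have "real b1 = (\<Sum>v\<in>S0. 1)" using cS0 by simp
    also have "\<dots> \<le> (\<Sum>v\<in>S0. gg C \<sigma>2 S0 - gg C \<sigma>2 (S0 - {v}))" by (intro sum_mono each)
    also have "\<dots> = measure_pmf.expectation \<sigma>2 (\<lambda>T. \<Sum>v\<in>S0. real (F C S0 T) - real (F C (S0 - {v}) T))"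
      unfolding gg_def by (subst E_setsum[OF fin2]) (simp add: E_diff[OF fin2])
    also have "\<dots> \<le> gg C \<sigma>2 S0"
      unfolding gg_def by (rule E_mono[OF fin2]) (rule P1[OF S0p(2)], use T_props in auto)
    finally show ?thesis using g0 by simp
  qed
qed

lemma packing_exists: "\<exists>P. set_packing V E C P \<and> card P = m_star V E C"
proof -
  have sub: "{card T | T. set_packing V E C T} \<subseteq> {0..card E}"
    using finE by (auto simp: set_packing_def card_mono)
  have fin: "finite {card T | T. set_packing V E C T}" using finite_subset[OF sub] by simp
  have ne: "{card T | T. set_packing V E C T} \<noteq> {}"
  proof -
    have "set_packing V E C {}" by (simp add: set_packing_def)
    then show ?thesis by blast
  qed
  show ?thesis using Max_in[OF fin ne] unfolding m_star_def by auto
qed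

lemma K:
  assumes f: "\<forall>T\<in>set_pmf \<sigma>2. f \<in> T" and fE: "f \<in> E" and q: "qd C \<sigma>1 f < 1"
  shows False
proof -
  have Vb: "real b1 \<le> V0" by (rule V0_ge_b1[OF f fE q])
  obtain P where P: "set_packing V E C P" "card P = m_star V E C" using packing_exists by blast
  have PE: "P \<subseteq> E" using P by (auto simp: set_packing_def)
  have finP: "finite P" using finite_subset[OF PE finE] .
  show False
  proof (cases "\<forall>S\<in>set_pmf \<sigma>1. CS C S \<inter> P = {}")
    case True
    obtain T1 where T1: "T1 \<subseteq> P" "card T1 = b2"
      using obtain_subset_with_card_n[of b2 P] P(2) b2m by (metis less_imp_le)
    have "T1 \<in> A2 E b2" using T1 PE by (auto simp: A2_def)
    then have "V0 \<le> kk C \<sigma>1 T1" using att_bound T1 by blast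
    moreover have "kk C \<sigma>1 T1 \<le> 0"
      unfolding kk_def
    proof (rule E_le_const[OF fin1])
      fix S assume "S \<in> set_pmf \<sigma>1"
      then have "CS C S \<inter> T1 = {}" using True T1 by blast
      then show "real (F C S T1) \<le> 0" by (simp add: F_def)
    qed
    ultimately show False using Vb b1pos by simp
  next
    case False
    then obtain S1 a where S1: "S1 \<in> set_pmf \<sigma>1" "a \<in> CS C S1" "a \<in> P" by blast
    have "b2 \<le> card (P - {a})" using S1 P(2) b2m finP by simp
    then obtain T1 where T1: "T1 \<subseteq> P - {a}" "card T1 = b2"
      using obtain_subset_with_card_n by metis
    have "T1 \<in> A2 E b2" using T1 PE by (auto simp: A2_def)
    then have VT: "V0 \<le> kk C \<sigma>1 T1" using att_bound T1 by blast
    have finT1: "finite T1" using finite_subset[OF _ finP] T1 by blast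
    have pt: "real (F C S T1) + real (F C S {a}) \<le> real b1" if S: "S \<in> set_pmf \<sigma>1" for S
    proof -
      have "card (CS C S \<inter> T1) + card (CS C S \<inter> {a}) = card ((CS C S \<inter> T1) \<union> (CS C S \<inter> {a}))"
        using T1 finT1 by (subst card_Un_disjoint) auto
      also have "\<dots> \<le> card (CS C S \<inter> P)"
        using T1 S1(3) finP by (intro card_mono) auto
      also have "\<dots> \<le> card S" using F_packing[OF P(1)] S_props[OF S] by (simp add: F_def)
      also have "\<dots> \<le> b1" using S_props[OF S] by simp
      finally show ?thesis unfolding F_def by linarith
    qed
    have "kk C \<sigma>1 T1 + kk C \<sigma>1 {a} \<le> real b1"
      unfolding kk_def E_add[OF fin1, symmetric] by (rule E_le_const[OF fin1 pt])
    moreover have "real (F C S1 {a}) * pmf \<sigma>1 S1 \<le> kk C \<sigma>1 {a}"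
      unfolding kk_def by (rule E_ge_point[OF fin1 _ S1(1)]) simp
    moreover have "pmf \<sigma>1 S1 > 0" using S1(1) by (simp add: pmf_positive)
    ultimately show False using VT Vb S1(2) by (simp add: F_single)
  qed
qed

end


lemma E_const_on:
  fixes f :: "'a \<Rightarrow> real"
  assumes fin: "finite (set_pmf p)" and h: "\<And>x. x \<in> set_pmf p \<Longrightarrow> f x = c"
  shows "measure_pmf.expectation p f = c"
proof -
  have "measure_pmf.expectation p f \<le> c" by (rule E_le_const[OF fin]) (simp add: h)
  moreover have "c \<le> measure_pmf.expectation p f" by (rule E_ge_const[OF fin]) (simp add: h)
  ultimately show ?thesis by simp
qed

context ne begin

lemma h_sum: "finite T \<Longrightarrow> real (card T) - kk C \<sigma>1 T = (\<Sum>e\<in>T. 1 - qd C \<sigma>1 e)"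
  by (simp add: kk_sum[OF fin1] sum_subtractf)

lemma SW:
  assumes T: "T \<in> set_pmf \<sigma>2" and e: "e \<in> T" and m: "m \<in> E" "m \<notin> T"
    and lt: "1 - qd C \<sigma>1 e < 1 - qd C \<sigma>1 m"
  shows False
proof -
  have Tp: "T \<subseteq> E" "finite T" "card T \<le> b2" using T_props[OF T] by auto
  define T' where "T' = insert m (T - {e})"
  have finT': "finite T'" using Tp by (simp add: T'_def)
  have "card T > 0" using e Tp card_gt_0_iff by blast
  then have cT': "card T' = card T" using e m Tp by (simp add: T'_def card_insert_if)
  have "T' \<in> A2 E b2" using Tp m cT' by (auto simp: A2_def T'_def)
  then have "real (card T') - kk C \<sigma>1 T' \<le> U2 C \<sigma>1 \<sigma>2" by (rule att_br)
  also have "\<dots> = real (card T) - kk C \<sigma>1 T" using att_supp[OF T] by simp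
  finally have le: "(\<Sum>x\<in>T'. 1 - qd C \<sigma>1 x) \<le> (\<Sum>x\<in>T. 1 - qd C \<sigma>1 x)"
    using h_sum[OF finT'] h_sum[OF Tp(2)] by simp
  have "(\<Sum>x\<in>T'. 1 - qd C \<sigma>1 x) = (1 - qd C \<sigma>1 m) + (\<Sum>x\<in>T - {e}. 1 - qd C \<sigma>1 x)"
    using m Tp by (simp add: T'_def)
  moreover have "(\<Sum>x\<in>T. 1 - qd C \<sigma>1 x) = (1 - qd C \<sigma>1 e) + (\<Sum>x\<in>T - {e}. 1 - qd C \<sigma>1 x)"
    using e Tp by (simp add: sum.remove)
  ultimately show False using le lt by simp
qed

lemma AD:
  assumes T: "T \<in> set_pmf \<sigma>2" and c: "card T < b2" and m: "m \<in> E" "m \<notin> T"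
    and pos: "0 < 1 - qd C \<sigma>1 m"
  shows False
proof -
  have Tp: "T \<subseteq> E" "finite T" "card T \<le> b2" using T_props[OF T] by auto
  define T' where "T' = insert m T"
  have finT': "finite T'" using Tp by (simp add: T'_def)
  have "T' \<in> A2 E b2" using Tp m c by (auto simp: A2_def T'_def)
  then have "real (card T') - kk C \<sigma>1 T' \<le> U2 C \<sigma>1 \<sigma>2" by (rule att_br)
  also have "\<dots> = real (card T) - kk C \<sigma>1 T" using att_supp[OF T] by simp
  finally have le: "(\<Sum>x\<in>T'. 1 - qd C \<sigma>1 x) \<le> (\<Sum>x\<in>T. 1 - qd C \<sigma>1 x)"
    using h_sum[OF finT'] h_sum[OF Tp(2)] by simp
  have "(\<Sum>x\<in>T'. 1 - qd C \<sigma>1 x) = (1 - qd C \<sigma>1 m) + (\<Sum>x\<in>T. 1 - qd C \<sigma>1 x)"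
    using m Tp by (simp add: T'_def)
  then show False using le pos by simp
qed

lemma struct:
  assumes pos: "0 < ub C \<sigma>1 E" and T: "T \<in> set_pmf \<sigma>2"
  shows "card T = b2" "\<And>e. e \<in> T \<Longrightarrow> 1 - qd C \<sigma>1 e = ub C \<sigma>1 E"
proof -
  define M where "M = {e\<in>E. 1 - qd C \<sigma>1 e = ub C \<sigma>1 E}"
  have finM: "finite M" using finE by (simp add: M_def)
  have ubge: "\<And>e. e \<in> E \<Longrightarrow> 1 - qd C \<sigma>1 e \<le> ub C \<sigma>1 E" using ub_bounds(3)[OF fin1] .
  obtain m where m: "m \<in> E" "1 - qd C \<sigma>1 m = ub C \<sigma>1 E" using ub_attained by blast
  have "\<not> (\<forall>T\<in>set_pmf \<sigma>2. m \<in> T)"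
    using K[of m] m pos by auto
  then obtain Tm where Tm: "Tm \<in> set_pmf \<sigma>2" "m \<notin> Tm" by blast
  have TmE: "Tm \<subseteq> E" "card Tm \<le> b2" using T_props[OF Tm(1)] by auto
  have TmM: "Tm \<subseteq> M"
  proof
    fix e assume e: "e \<in> Tm"
    have "\<not> 1 - qd C \<sigma>1 e < 1 - qd C \<sigma>1 m" using SW[OF Tm(1) e m(1) Tm(2)] by blast
    then show "e \<in> M" using ubge[of e] e TmE m by (auto simp: M_def)
  qed
  have cTm: "card Tm = b2"
  proof (rule ccontr)
    assume "card Tm \<noteq> b2"
    then have "card Tm < b2" using TmE by simp
    then show False using AD[OF Tm(1) _ m(1) Tm(2)] m pos by simp
  qed
  have "insert m Tm \<subseteq> M" using TmM m by (auto simp: M_def)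
  then have "card (insert m Tm) \<le> card M" using finM by (rule card_mono[rotated])
  then have cM: "b2 < card M" using cTm Tm(2) finite_subset[OF TmM finM] by simp
  have Tp: "T \<subseteq> E" "finite T" "card T \<le> b2" using T_props[OF T] by auto
  have "\<not> M \<subseteq> T"
  proof
    assume "M \<subseteq> T"
    then have "card M \<le> card T" using Tp by (simp add: card_mono)
    then show False using cM Tp by simp
  qed
  then obtain m' where m': "m' \<in> M" "m' \<notin> T" by blast
  have m'E: "m' \<in> E" "1 - qd C \<sigma>1 m' = ub C \<sigma>1 E" using m' by (auto simp: M_def)
  show "card T = b2"
  proof (rule ccontr)
    assume "card T \<noteq> b2"
    then have "card T < b2" using Tp by simp
    then show False using AD[OF T _ m'E(1) m'(2)] m'E pos by simp
  qed
  fix e assume e: "e \<in> T"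
  have "\<not> 1 - qd C \<sigma>1 e < 1 - qd C \<sigma>1 m'" using SW[OF T e m'E(1) m'(2)] by blast
  then show "1 - qd C \<sigma>1 e = ub C \<sigma>1 E" using ubge[of e] e Tp m'E by auto
qed

lemma kk_struct:
  assumes pos: "0 < ub C \<sigma>1 E" and T: "T \<in> set_pmf \<sigma>2"
  shows "kk C \<sigma>1 T = real b2 * (1 - ub C \<sigma>1 E)"
proof -
  have finT: "finite T" using T_props[OF T] by auto
  have "kk C \<sigma>1 T = (\<Sum>e\<in>T. 1 - ub C \<sigma>1 E)"
    unfolding kk_sum[OF fin1 finT] using struct(2)[OF pos T] by (intro sum.cong) force+
  then show ?thesis using struct(1)[OF pos T] by simp
qed

lemma V0_struct:
  assumes pos: "0 < ub C \<sigma>1 E"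
  shows "V0 = real b2 * (1 - ub C \<sigma>1 E)"
  unfolding U1_split(2)[OF fin1 fin2]
  by (rule E_const_on[OF fin2]) (rule kk_struct[OF pos])

lemma rate_eq:
  assumes ne: "\<forall>T\<in>set_pmf \<sigma>2. T \<noteq> {}"
  shows "rate C \<sigma>1 \<sigma>2 = 1 - ub C \<sigma>1 E"
proof -
  have pt: "kk C \<sigma>1 T / real (card T) = 1 - ub C \<sigma>1 E" if T: "T \<in> set_pmf \<sigma>2" for T
  proof (cases "0 < ub C \<sigma>1 E")
    case True
    then show ?thesis using kk_struct[OF True T] struct(1)[OF True T] b2pos by simp
  next
    case False
    then have ub0: "ub C \<sigma>1 E = 0" using ub_bounds(1)[OF fin1] by simp
    have Tp: "T \<subseteq> E" "finite T" using T_props[OF T] by auto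
    have "\<forall>e\<in>T. qd C \<sigma>1 e = 1"
    proof
      fix e assume "e \<in> T"
      then have "e \<in> E" using Tp by blast
      then show "qd C \<sigma>1 e = 1" using ub_bounds(3)[OF fin1, of e] ub0 qd_bounds(2)[OF fin1, of C e] by linarith
    qed
    then have "kk C \<sigma>1 T = real (card T)" unfolding kk_sum[OF fin1 Tp(2)] by simp
    moreover have "card T > 0" using ne T Tp by (simp add: card_gt_0_iff)
    ultimately show ?thesis using ub0 by simp
  qed
  show ?thesis unfolding rate_split[OF fin1 fin2]
    by (rule E_const_on[OF fin2]) (rule pt)
qed

lemma ub_min:
  assumes tau: "set_pmf \<tau> \<subseteq> A1 V b1"
  shows "ub C \<sigma>1 E \<le> ub C \<tau> E"
proof (cases "0 < ub C \<sigma>1 E")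
  case False
  then show ?thesis using ub_bounds(1)[OF fin_supp1[OF tau]] by simp
next
  case True
  have fint: "finite (set_pmf \<tau>)" by (rule fin_supp1[OF tau])
  have "U1 C \<tau> \<sigma>2 \<le> V0" using NE tau by (auto simp: is_NE_def)
  moreover have "real b2 * (1 - ub C \<tau> E) \<le> U1 C \<tau> \<sigma>2"
    unfolding U1_split(2)[OF fint fin2]
  proof (rule E_ge_const[OF fin2])
    fix T assume T: "T \<in> set_pmf \<sigma>2"
    have Tp: "T \<subseteq> E" "finite T" using T_props[OF T] by auto
    have "(\<Sum>e\<in>T. 1 - ub C \<tau> E) \<le> (\<Sum>e\<in>T. qd C \<tau> e)"
      using ub_bounds(3)[OF fint] Tp by (intro sum_mono) force
    then show "real b2 * (1 - ub C \<tau> E) \<le> kk C \<tau> T"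
      unfolding kk_sum[OF fint Tp(2)] using struct(1)[OF True T] by simp
  qed
  ultimately have "real b2 * (1 - ub C \<tau> E) \<le> real b2 * (1 - ub C \<sigma>1 E)"
    using V0_struct[OF True] by simp
  then show ?thesis using b2pos by simp
qed

lemma ub_pos_if:
  assumes "b1 < n_star V E C"
  shows "0 < ub C \<sigma>1 E"
proof (rule ccontr)
  assume "\<not> 0 < ub C \<sigma>1 E"
  then have ub0: "ub C \<sigma>1 E = 0" using ub_bounds(1)[OF fin1] by simp
  obtain S where S: "S \<in> set_pmf \<sigma>1" by (meson ex_in_conv set_pmf_not_empty)
  have Sp: "S \<subseteq> V" "finite S" "card S \<le> b1" using S_props[OF S] by auto
  have "\<forall>e\<in>E. qd C \<sigma>1 e = 1"
  proof
    fix e assume "e \<in> E"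
    then show "qd C \<sigma>1 e = 1" using ub_bounds(3)[OF fin1, of e] ub0 qd_bounds(2)[OF fin1, of C e] by linarith
  qed
  then have "E \<subseteq> CS C S"
  proof (intro subsetI)
    fix e assume "\<forall>e\<in>E. qd C \<sigma>1 e = 1" "e \<in> E"
    then have "qd C \<sigma>1 e = 1" by blast
    then have "\<forall>S\<in>set_pmf \<sigma>1. e \<in> CS C S" using qd_one_iff[OF fin1, of C e] by simp
    then show "e \<in> CS C S" using S by blast
  qed
  then have sc: "set_cover V E C S" using CS_sub[OF Sp(1)] Sp by (auto simp: set_cover_def)
  have sub: "{card S | S. set_cover V E C S} \<subseteq> card ` Pow V" by (auto simp: set_cover_def)
  have fin: "finite {card S | S. set_cover V E C S}" using finite_subset[OF sub] finV by simp
  have "n_star V E C \<le> card S" unfolding n_star_def using sc fin by (intro Min_le) auto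
  then show False using assms Sp by simp
qed

end


lemma ne_intro:
  "detection_model V E C \<Longrightarrow> is_NE V E C b1 b2 \<sigma>1 \<sigma>2 \<Longrightarrow> 0 < b1 \<Longrightarrow> 0 < b2 \<Longrightarrow>
   b2 < m_star V E C \<Longrightarrow> ne V E C b1 b2 \<sigma>1 \<sigma>2"
  by (simp add: ne_def dm_def ne_axioms_def)

theorem theorem3:
  fixes V :: "'v set" and E :: "'e set" and C :: "'v \<Rightarrow> 'e set"
  assumes "detection_model V E C"
  shows "\<forall>b1::nat. b1 > 0 \<longrightarrow> (\<exists>r::real. 0 \<le> r \<and> r \<le> 1 \<and>
     (\<forall>b2::nat. \<forall>\<sigma>1 \<sigma>2. 0 < b2 \<and> b2 < m_star V E C \<and> is_NE V E C b1 b2 \<sigma>1 \<sigma>2 \<and>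
        (\<forall>T\<in>set_pmf \<sigma>2. T \<noteq> {}) \<longrightarrow> rate C \<sigma>1 \<sigma>2 = r) \<and>
     (b1 < n_star V E C \<longrightarrow>
       (\<forall>b2::nat. \<forall>\<sigma>1 \<sigma>2. 0 < b2 \<and> b2 < m_star V E C \<and> is_NE V E C b1 b2 \<sigma>1 \<sigma>2 \<longrightarrow>
          (\<forall>T\<in>set_pmf \<sigma>2. card T = b2) \<and>
          U1 C \<sigma>1 \<sigma>2 = real b2 * r \<and> U2 C \<sigma>1 \<sigma>2 = real b2 * (1 - r))))"
proof (intro allI impI)
  fix b1 :: nat assume b1: "b1 > 0"
  interpret dm V E C using assms by (simp add: dm_def)
  define Q where "Q b2 \<sigma>1 \<sigma>2 \<longleftrightarrow> 0 < b2 \<and> b2 < m_star V E C \<and> is_NE V E C b1 b2 \<sigma>1 \<sigma>2"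
    for b2 \<sigma>1 \<sigma>2
  have neQ: "Q b2 \<sigma>1 \<sigma>2 \<Longrightarrow> ne V E C b1 b2 \<sigma>1 \<sigma>2" for b2 \<sigma>1 \<sigma>2
    using ne_intro[OF assms] b1 by (auto simp: Q_def)
  have same: "ub C \<sigma>1 E = ub C \<sigma>1' E" if "Q b2 \<sigma>1 \<sigma>2" "Q b2' \<sigma>1' \<sigma>2'" for b2 \<sigma>1 \<sigma>2 b2' \<sigma>1' \<sigma>2'
  proof -
    have n1: "ne V E C b1 b2 \<sigma>1 \<sigma>2" and n2: "ne V E C b1 b2' \<sigma>1' \<sigma>2'" using neQ that by auto
    have s1: "set_pmf \<sigma>1 \<subseteq> A1 V b1" using ne.supp1[OF n1] .
    have s2: "set_pmf \<sigma>1' \<subseteq> A1 V b1" using ne.supp1[OF n2] .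
    show ?thesis using ne.ub_min[OF n1 s2] ne.ub_min[OF n2 s1] by simp
  qed
  show "\<exists>r::real. 0 \<le> r \<and> r \<le> 1 \<and>
     (\<forall>b2::nat. \<forall>\<sigma>1 \<sigma>2. 0 < b2 \<and> b2 < m_star V E C \<and> is_NE V E C b1 b2 \<sigma>1 \<sigma>2 \<and>
        (\<forall>T\<in>set_pmf \<sigma>2. T \<noteq> {}) \<longrightarrow> rate C \<sigma>1 \<sigma>2 = r) \<and>
     (b1 < n_star V E C \<longrightarrow>
       (\<forall>b2::nat. \<forall>\<sigma>1 \<sigma>2. 0 < b2 \<and> b2 < m_star V E C \<and> is_NE V E C b1 b2 \<sigma>1 \<sigma>2 \<longrightarrow>
          (\<forall>T\<in>set_pmf \<sigma>2. card T = b2) \<and>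
          U1 C \<sigma>1 \<sigma>2 = real b2 * r \<and> U2 C \<sigma>1 \<sigma>2 = real b2 * (1 - r)))"
  proof (cases "\<exists>b2 \<sigma>1 \<sigma>2. Q b2 \<sigma>1 \<sigma>2")
    case False
    then show ?thesis by (intro exI[of _ 0]) (auto simp: Q_def)
  next
    case True
    then obtain b20 \<sigma>10 \<sigma>20 where Q0: "Q b20 \<sigma>10 \<sigma>20" by blast
    have n0: "ne V E C b1 b20 \<sigma>10 \<sigma>20" using neQ[OF Q0] .
    define r where "r = 1 - ub C \<sigma>10 E"
    have r01: "0 \<le> r" "r \<le> 1" using ub_bounds[OF ne.fin1[OF n0]] by (auto simp: r_def)
    have c1: "rate C \<sigma>1 \<sigma>2 = r" if "Q b2 \<sigma>1 \<sigma>2" "\<forall>T\<in>set_pmf \<sigma>2. T \<noteq> {}" for b2 \<sigma>1 \<sigma>2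
      using ne.rate_eq[OF neQ[OF that(1)] that(2)] same[OF that(1) Q0] by (simp add: r_def)
    have c2: "(\<forall>T\<in>set_pmf \<sigma>2. card T = b2) \<and>
          U1 C \<sigma>1 \<sigma>2 = real b2 * r \<and> U2 C \<sigma>1 \<sigma>2 = real b2 * (1 - r)"
      if "Q b2 \<sigma>1 \<sigma>2" "b1 < n_star V E C" for b2 \<sigma>1 \<sigma>2
    proof -
      have n: "ne V E C b1 b2 \<sigma>1 \<sigma>2" using neQ[OF that(1)] .
      have pos: "0 < ub C \<sigma>1 E" using ne.ub_pos_if[OF n that(2)] .
      have ueq: "ub C \<sigma>1 E = 1 - r" using same[OF that(1) Q0] by (simp add: r_def)
      have card: "\<forall>T\<in>set_pmf \<sigma>2. card T = b2" using ne.struct(1)[OF n pos] by blast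
      have u1: "U1 C \<sigma>1 \<sigma>2 = real b2 * r" using ne.V0_struct[OF n pos] ueq by simp
      have ec: "measure_pmf.expectation \<sigma>2 (\<lambda>T. real (card T)) = real b2"
        by (rule E_const_on[OF ne.fin2[OF n]]) (simp add: card)
      have "U2 C \<sigma>1 \<sigma>2 = real b2 * (1 - r)" unfolding U2_def ec u1 by (simp add: algebra_simps)
      then show ?thesis using card u1 by simp
    qed
    show ?thesis
      by (rule exI[of _ r]) (use r01 c1 c2 in \<open>auto simp: Q_def\<close>)
  qed
qed

end
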